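(* For $m\ge1$ define polynomials by $p_1(x)=x$, $q_1(x)=1$, and for $m>1$, $p_m(x)=p_{m-1}(x)q_{m-1}(x)$ and $q_m(x)=q_{m-1}(x)^2-\frac{p_{m-1}(x)^2}{x}$. For $m\ge1$ let $A_m$ be the $m\times m$ coloring matrix with entries $a_{ij}=1$ if $i>j$ and $a_{ij}=0$ if $i\le j$. Then for every $m\ge1$, the generating function $F^{(m)}(x)=\sum_{n\ge1}t_{A_m}^{(m)}(n)x^n$ is rational, and $$F^{(m)}(x)=\frac{p_m(x)}{q_m(x)}.$$
   Context: A plane tree is an unlabeled rooted tree in which the children of every vertex are linearly ordered. A coloring matrix is an $m\times m$ matrix $A=(a_{ij})$ with entries in $\{0,1\}$. An $A$-coloring of a plane tree assigns to each vertex a color in $\{1,\dots,m\}$ such that whenever a vertex of color $j$ is a child of a vertex of color $i$, $a_{ij}=1$. Let $t_A^{(i)}(n)$ be the number of pairs (plane tree with $n$ vertices, $A$-coloring of it) in which the root has color $i$. *)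

theory Defs
  imports "HOL-Computational_Algebra.Computational_Algebra"
begin

text \<open>A plane tree together with a coloring: each vertex carries its color,
  and the children of a vertex are given as an (ordered) list.\<close>
datatype ctree = CNode nat "ctree list"

fun root_color :: "ctree \<Rightarrow> nat" where
  "root_color (CNode c ts) = c"

fun nverts :: "ctree \<Rightarrow> nat" where
  "nverts (CNode c ts) = 1 + sum_list (map nverts ts)"

text \<open>A-coloring for an m x m 0/1 coloring matrix, represented as a predicate
  a i j (true iff a_ij = 1), indices 1..m.\<close>
fun is_A_colored :: "(nat \<Rightarrow> nat \<Rightarrow> bool) \<Rightarrow> nat \<Rightarrow> ctree \<Rightarrow> bool" where
  "is_A_colored a m (CNode c ts) =
     (c \<in> {1..m} \<and> (\<forall>t\<in>set ts. a c (root_color t) \<and> is_A_colored a m t))"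

definition t_count :: "(nat \<Rightarrow> nat \<Rightarrow> bool) \<Rightarrow> nat \<Rightarrow> nat \<Rightarrow> nat \<Rightarrow> nat" where
  "t_count a m i n = card {t. nverts t = n \<and> is_A_colored a m t \<and> root_color t = i}"

definition A_mat :: "nat \<Rightarrow> nat \<Rightarrow> bool" where
  "A_mat i j = (i > j)"

fun pq :: "nat \<Rightarrow> real poly \<times> real poly" where
  "pq 0 = undefined"
| "pq (Suc 0) = ([:0, 1:], 1)"
| "pq (Suc (Suc n)) =
     (let (p, q) = pq (Suc n) in (p * q, q ^ 2 - (p ^ 2) div [:0, 1:]))"

definition p_poly :: "nat \<Rightarrow> real poly" where "p_poly m = fst (pq m)"
definition q_poly :: "nat \<Rightarrow> real poly" where "q_poly m = snd (pq m)"

definition F_gen :: "nat \<Rightarrow> real fps" where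
  "F_gen m = Abs_fps (\<lambda>n. if n = 0 then 0 else real (t_count A_mat m m n))"

end

theory Submission
  imports Defs
begin

definition TT :: "nat \<Rightarrow> nat \<Rightarrow> nat \<Rightarrow> ctree set" where
  "TT m i n = {t. nverts t = n \<and> is_A_colored A_mat m t \<and> root_color t = i}"

definition LL :: "nat \<Rightarrow> nat \<Rightarrow> nat \<Rightarrow> ctree list set" where
  "LL m i n = {ts. sum_list (map nverts ts) = n \<and>
                   (\<forall>t\<in>set ts. is_A_colored A_mat m t \<and> root_color t < i)}"

lemma nverts_pos: "nverts t \<ge> 1"
  by (cases t) auto

lemma TT_0: "TT m i 0 = {}"
  using nverts_pos unfolding TT_def by (auto simp: Suc_le_eq)

lemma TT_Suc: "i \<in> {1..m} \<Longrightarrow> TT m i (Suc n) = CNode i ` LL m i n"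
proof (intro set_eqI iffI)
  fix t assume i: "i \<in> {1..m}" and t: "t \<in> TT m i (Suc n)"
  obtain c ts where "t = CNode c ts" by (cases t)
  with t show "t \<in> CNode i ` LL m i n"
    unfolding TT_def LL_def by (auto simp: A_mat_def)
next
  fix t assume i: "i \<in> {1..m}" and t: "t \<in> CNode i ` LL m i n"
  then show "t \<in> TT m i (Suc n)"
    unfolding TT_def LL_def by (auto simp: A_mat_def)
qed

lemma TT_bad: "i \<notin> {1..m} \<Longrightarrow> TT m i n = {}"
proof -
  assume i: "i \<notin> {1..m}"
  { fix t assume "t \<in> TT m i n"
    then have False using i unfolding TT_def by (cases t) auto }
  then show ?thesis by blast
qed

lemma LL_0: "LL m i 0 = {[]}"
proof -
  { fix ts assume "ts \<in> LL m i 0"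
    then have "ts = []" unfolding LL_def using nverts_pos[of "hd ts"]
      by (cases ts) auto }
  then show ?thesis unfolding LL_def by auto
qed

lemma LL_Suc: "LL m i (Suc n) =
  (\<Union>k\<in>{1..Suc n}. \<Union>j\<in>{1..<i}. (\<lambda>(t,ts). t#ts) ` (TT m j k \<times> LL m i (Suc n - k)))"
proof (intro set_eqI iffI)
  fix ts assume ts: "ts \<in> LL m i (Suc n)"
  then obtain t ts' where e: "ts = t # ts'" unfolding LL_def by (cases ts) auto
  have col: "is_A_colored A_mat m t" "root_color t < i" using ts e unfolding LL_def by auto
  have "root_color t \<in> {1..m}" using col(1) by (cases t) auto
  moreover have "nverts t \<in> {1..Suc n}" using nverts_pos[of t] ts e unfolding LL_def by auto
  moreover have "t \<in> TT m (root_color t) (nverts t)" using col unfolding TT_def by auto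
  moreover have "ts' \<in> LL m i (Suc n - nverts t)" using ts e unfolding LL_def by auto
  ultimately show "ts \<in> (\<Union>k\<in>{1..Suc n}. \<Union>j\<in>{1..<i}. (\<lambda>(t,ts). t#ts) ` (TT m j k \<times> LL m i (Suc n - k)))"
    using e col by force
next
  fix ts assume "ts \<in> (\<Union>k\<in>{1..Suc n}. \<Union>j\<in>{1..<i}. (\<lambda>(t,ts). t#ts) ` (TT m j k \<times> LL m i (Suc n - k)))"
  then obtain k j t ts' where k: "k \<in> {1..Suc n}" and j: "j \<in> {1..<i}" and
    t: "t \<in> TT m j k" and ts': "ts' \<in> LL m i (Suc n - k)" and e: "ts = t # ts'" by auto
  then show "ts \<in> LL m i (Suc n)" unfolding LL_def TT_def by auto
qed

lemma TT_fin: "finite (LL m j n) \<Longrightarrow> finite (TT m j (Suc n))"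
  by (cases "j \<in> {1..m}") (auto simp: TT_Suc TT_bad)

lemma LL_fin: "finite (LL m i n)"
proof (induction n arbitrary: i rule: less_induct)
  case (less n)
  show ?case
  proof (cases n)
    case 0 then show ?thesis by (simp add: LL_0)
  next
    case (Suc n')
    have "finite (TT m j k)" if kk: "k \<in> {1..Suc n'}" for j k
    proof -
      obtain k' where "k = Suc k'" using kk by (cases k) auto
      then show ?thesis using less[of k' j] kk Suc TT_fin by auto
    qed
    moreover have "finite (LL m i (Suc n' - k))" if "k \<in> {1..Suc n'}" for k
      using less[of "Suc n' - k" i] that Suc by auto
    ultimately show ?thesis unfolding Suc LL_Suc by auto
  qed
qed

lemma LL_Suc_card: "card (LL m i (Suc n)) =
  (\<Sum>k\<in>{1..Suc n}. \<Sum>j\<in>{1..<i}. card (TT m j k) * card (LL m i (Suc n - k)))"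
proof -
  have fT: "finite (TT m j k)" if kk: "k \<ge> 1" for j k
  proof -
    obtain k' where "k = Suc k'" using kk by (cases k) auto
    then show ?thesis using TT_fin LL_fin by auto
  qed
  have inj: "inj_on (\<lambda>(t,ts). t#ts) A" for A :: "(ctree \<times> ctree list) set"
    by (auto simp: inj_on_def)
  have "card (LL m i (Suc n)) = (\<Sum>k\<in>{1..Suc n}. card (\<Union>j\<in>{1..<i}. (\<lambda>(t,ts). t#ts) ` (TT m j k \<times> LL m i (Suc n - k))))"
    unfolding LL_Suc
    apply (rule card_UN_disjoint)
      apply simp
    using fT LL_fin apply auto[1]
    unfolding TT_def by auto
  also have "\<dots> = (\<Sum>k\<in>{1..Suc n}. \<Sum>j\<in>{1..<i}. card ((\<lambda>(t,ts). t#ts) ` (TT m j k \<times> LL m i (Suc n - k))))"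
    apply (rule sum.cong, rule refl)
    apply (rule card_UN_disjoint)
      apply simp
    using fT LL_fin apply auto[1]
    unfolding TT_def by auto
  also have "\<dots> = (\<Sum>k\<in>{1..Suc n}. \<Sum>j\<in>{1..<i}. card (TT m j k) * card (LL m i (Suc n - k)))"
    by (simp add: card_image[OF inj] card_cartesian_product)
  finally show ?thesis .
qed

definition Tf :: "nat \<Rightarrow> nat \<Rightarrow> real fps" where
  "Tf m i = Abs_fps (\<lambda>n. real (card (TT m i n)))"
definition Lf :: "nat \<Rightarrow> nat \<Rightarrow> real fps" where
  "Lf m i = Abs_fps (\<lambda>n. real (card (LL m i n)))"

lemma Tf_0: "Tf m j $ 0 = 0"
  by (simp add: Tf_def TT_0)

lemma Tf_eq: "i \<in> {1..m} \<Longrightarrow> Tf m i = fps_X * Lf m i"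
proof (rule fps_ext)
  fix n assume i: "i \<in> {1..m}"
  show "Tf m i $ n = (fps_X * Lf m i) $ n"
  proof (cases n)
    case 0 then show ?thesis by (simp add: Tf_0)
  next
    case (Suc n')
    have "inj_on (CNode i) A" for A by (auto simp: inj_on_def)
    then show ?thesis using i Suc by (simp add: Tf_def Lf_def TT_Suc card_image)
  qed
qed

lemma Lf_eq: "Lf m i = 1 + (\<Sum>j\<in>{1..<i}. Tf m j) * Lf m i"
proof (rule fps_ext)
  fix n
  show "Lf m i $ n = (1 + (\<Sum>j\<in>{1..<i}. Tf m j) * Lf m i) $ n"
  proof (cases n)
    case 0 then show ?thesis by (simp add: Lf_def LL_0 fps_mult_nth fps_sum_nth Tf_0)
  next
    case (Suc n')
    have "((\<Sum>j\<in>{1..<i}. Tf m j) * Lf m i) $ Suc n' =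
       (\<Sum>k=0..Suc n'. (\<Sum>j\<in>{1..<i}. Tf m j $ k) * Lf m i $ (Suc n' - k))"
      by (simp add: fps_mult_nth fps_sum_nth)
    also have "\<dots> = (\<Sum>k=1..Suc n'. (\<Sum>j\<in>{1..<i}. Tf m j $ k) * Lf m i $ (Suc n' - k))"
      by (simp add: sum.atLeast_Suc_atMost Tf_0)
    also have "\<dots> = real (card (LL m i (Suc n')))"
      by (simp add: LL_Suc_card Tf_def Lf_def sum_distrib_right)
    finally show ?thesis using Suc by (simp add: Lf_def)
  qed
qed

definition U :: "nat \<Rightarrow> nat \<Rightarrow> real fps" where
  "U m i = 1 - (\<Sum>j\<in>{1..<i}. Tf m j)"

lemma LU: "Lf m i * U m i = 1"
proof -
  have "Lf m i = 1 + (\<Sum>j\<in>{1..<i}. Tf m j) * Lf m i" by (rule Lf_eq)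
  then show ?thesis unfolding U_def by (simp add: algebra_simps)
qed

lemma TU: "i \<in> {1..m} \<Longrightarrow> Tf m i * U m i = fps_X"
  using LU[of m i] by (simp add: Tf_eq mult.assoc)

lemma U_Suc: "i \<ge> 1 \<Longrightarrow> U m (Suc i) = U m i - Tf m i"
  unfolding U_def by (simp add: sum.atLeastLessThan_Suc)

lemma pq_step: "n \<ge> 1 \<Longrightarrow> p_poly (Suc n) = p_poly n * q_poly n \<and>
   q_poly (Suc n) = q_poly n ^ 2 - p_poly n ^ 2 div [:0,1:]"
  by (cases n) (auto simp: p_poly_def q_poly_def split: prod.split)

lemma main: "1 \<le> i \<Longrightarrow> i \<le> m \<Longrightarrow> \<exists>r. p_poly i = [:0,1:] * r \<and>
   fps_of_poly (q_poly i) = U m i * fps_of_poly r \<and> poly r 0 = 1 \<and> poly (q_poly i) 0 = 1"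
proof (induction i)
  case 0 then show ?case by simp
next
  case (Suc k)
  show ?case
  proof (cases "k = 0")
    case True
    then show ?thesis by (intro exI[of _ 1]) (simp add: p_poly_def q_poly_def U_def)
  next
    case False
    then have k: "k \<ge> 1" "k \<in> {1..m}" using Suc by auto
    then obtain r where r: "p_poly k = [:0,1:] * r" "fps_of_poly (q_poly k) = U m k * fps_of_poly r"
      "poly r 0 = 1" "poly (q_poly k) 0 = 1" using Suc by auto
    define q where "q = q_poly k"
    have X: "fps_of_poly [:0,1:] = (fps_X :: real fps)" by (simp add: fps_of_poly_pCons)
    have d: "p_poly k ^ 2 div [:0,1:] = [:0,1:] * r^2"
      unfolding r(1) power2_eq_square
      by (metis (no_types, lifting) mult.assoc mult.left_commute nonzero_mult_div_cancel_left pCons_eq_0_iff zero_neq_one)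
    have p: "p_poly (Suc k) = [:0,1:] * (r * q)" using pq_step[OF k(1)] r(1) q_def by (simp add: mult.assoc)
    have qq: "q_poly (Suc k) = q^2 - [:0,1:] * r^2" using pq_step[OF k(1)] d q_def by simp
    have "fps_of_poly (q_poly (Suc k)) = fps_of_poly q ^ 2 - fps_X * fps_of_poly r ^ 2"
      unfolding qq by (simp add: fps_of_poly_diff fps_of_poly_mult fps_of_poly_power X)
    also have "\<dots> = U m (Suc k) * fps_of_poly (r * q)"
    proof -
      have "U m (Suc k) * fps_of_poly (r * q) = (U m k - Tf m k) * fps_of_poly r * fps_of_poly q"
        by (simp add: U_Suc[OF k(1)] fps_of_poly_mult mult.assoc)
      also have "\<dots> = (U m k * fps_of_poly r) * fps_of_poly q - (Tf m k * U m k) * fps_of_poly r * (fps_of_poly r)"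
        using r(2) q_def by (simp add: algebra_simps)
      also have "\<dots> = fps_of_poly q ^ 2 - fps_X * fps_of_poly r ^ 2"
        using r(2) q_def TU[OF k(2)] by (simp add: power2_eq_square)
      finally show ?thesis by simp
    qed
    finally show ?thesis using p qq r(3,4) q_def
      by (intro exI[of _ "r * q"]) (simp add: power2_eq_square)
  qed
qed

theorem theorem40:
  fixes m :: nat
  assumes "m \<ge> 1"
  shows "poly (q_poly m) 0 \<noteq> 0 \<and>
         F_gen m = fps_of_poly (p_poly m) / fps_of_poly (q_poly m)"
proof -
  obtain r where r: "p_poly m = [:0,1:] * r" "fps_of_poly (q_poly m) = U m m * fps_of_poly r"
      "poly r 0 = 1" "poly (q_poly m) 0 = 1" using main[OF assms le_refl] by blast
  have X: "fps_of_poly [:0,1:] = (fps_X :: real fps)" by (simp add: fps_of_poly_pCons)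
  have F: "F_gen m = Tf m m"
    by (rule fps_ext) (simp add: F_gen_def Tf_def t_count_def TT_def[symmetric] TT_0)
  have mm: "m \<in> {1..m}" using assms by simp
  have nz: "fps_of_poly (q_poly m) \<noteq> 0"
  proof
    assume "fps_of_poly (q_poly m) = 0"
    then have "fps_of_poly (q_poly m) $ 0 = 0" by simp
    then show False using r(4) by (simp add: poly_0_coeff_0)
  qed
  have "F_gen m * fps_of_poly (q_poly m) = fps_of_poly (p_poly m)"
    unfolding F r(2) r(1) fps_of_poly_mult X using TU[OF mm] by (simp add: mult.assoc[symmetric])
  then have "fps_of_poly (p_poly m) / fps_of_poly (q_poly m) = F_gen m"
    using nz by (metis nonzero_mult_div_cancel_right)
  then show ?thesis using r(4) by simp
qed

end
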